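(* Let $d\ge 2$ and let $\gamma_1,\gamma_2\subset\mathbb{R}^d$ be irreducible real algebraic curves, neither of which is contained in a hyperplane. Suppose there exist an open interval $I\subset\mathbb{R}$, injective real analytic maps $\alpha_i:I\to\gamma_i$ ($i=1,2$) parameterizing arcs of $\gamma_i$, and an injective real analytic function $h$ defined on $\{x-y: x,y\in I\}$ such that $$\|\alpha_1(x)-\alpha_2(y)\| = h(x-y)\qquad\text{for all } x,y\in I.$$ Then each of $\gamma_1$ and $\gamma_2$ is contained in a quadric surface in $\mathbb{R}^d$.
   Context: A quadric surface in $\mathbb{R}^d$ is the zero set of a polynomial $q(\xi)=\sum_{1\le i\le j\le d}\sigma_{ij}\xi_i\xi_j+\sum_i\sigma_i\xi_i+\sigma$ that is not identically zero. *)

theory Defs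
  imports "HOL-Analysis.Analysis"
begin

definition poly_fun :: "(real^'n \<Rightarrow> real) \<Rightarrow> bool" where
  "poly_fun p \<longleftrightarrow> (\<exists>E :: ('n \<Rightarrow> nat) set. \<exists>c :: ('n \<Rightarrow> nat) \<Rightarrow> real. finite E \<and>
      (\<forall>x. p x = (\<Sum>e\<in>E. c e * (\<Prod>i\<in>UNIV. (x $ i) ^ (e i)))))"

definition algebraic_set :: "(real^'n) set \<Rightarrow> bool" where
  "algebraic_set Z \<longleftrightarrow> (\<exists>P. (\<forall>p\<in>P. poly_fun p) \<and> Z = {x. \<forall>p\<in>P. p x = 0})"

definition irreducible_algebraic_set :: "(real^'n) set \<Rightarrow> bool" where
  "irreducible_algebraic_set Z \<longleftrightarrow> algebraic_set Z \<and> Z \<noteq> {} \<and>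
     (\<forall>A B. algebraic_set A \<and> algebraic_set B \<and> Z = A \<union> B \<longrightarrow> Z = A \<or> Z = B)"

text \<open>An irreducible real algebraic curve: an irreducible algebraic set of dimension one,
  i.e. infinite, and every proper algebraic subset is finite (dimension 0).\<close>
definition irreducible_algebraic_curve :: "(real^'n) set \<Rightarrow> bool" where
  "irreducible_algebraic_curve Z \<longleftrightarrow> irreducible_algebraic_set Z \<and> infinite Z \<and>
     (\<forall>W. algebraic_set W \<and> W \<subset> Z \<longrightarrow> finite W)"

definition hyperplane :: "(real^'n) set \<Rightarrow> bool" where
  "hyperplane H \<longleftrightarrow> (\<exists>a b. a \<noteq> 0 \<and> H = {x. a \<bullet> x = b})"

text \<open>Quadric surface: zero set of a not identically zero polynomial of degree at most 2.
  The quadratic part \<Sum>_{i<=j} \<sigma>_ij x_i x_j is written as \<Sum>_{i,j} A_ij x_i x_j.\<close>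
definition quadric_poly :: "('n \<Rightarrow> 'n \<Rightarrow> real) \<Rightarrow> ('n \<Rightarrow> real) \<Rightarrow> real \<Rightarrow> real^'n \<Rightarrow> real" where
  "quadric_poly A b c x = (\<Sum>i\<in>UNIV. \<Sum>j\<in>UNIV. A i j * (x $ i) * (x $ j)) + (\<Sum>i\<in>UNIV. b i * (x $ i)) + c"

definition quadric_surface :: "(real^'n) set \<Rightarrow> bool" where
  "quadric_surface Q \<longleftrightarrow> (\<exists>A b c. (\<exists>x. quadric_poly A b c x \<noteq> 0) \<and> Q = {x. quadric_poly A b c x = 0})"

definition real_analytic_on :: "(real \<Rightarrow> 'a::real_normed_vector) \<Rightarrow> real set \<Rightarrow> bool" where
  "real_analytic_on f S \<longleftrightarrow> (\<forall>x0\<in>S. \<exists>r>0. \<exists>a :: nat \<Rightarrow> 'a.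
      \<forall>x. \<bar>x - x0\<bar> < r \<longrightarrow> (\<lambda>n. (x - x0) ^ n *\<^sub>R a n) sums f x)"

end

theory Submission
  imports Defs
begin

definition mon :: "('n \<Rightarrow> nat) \<Rightarrow> real^'n \<Rightarrow> real" where
  "mon e x = (\<Prod>i\<in>UNIV. (x $ i) ^ (e i))"

lemma poly_fun_gen:
  fixes K :: "'k set" and e :: "'k \<Rightarrow> ('n::finite \<Rightarrow> nat)"
  assumes "finite K"
  shows "poly_fun (\<lambda>x::real^'n. \<Sum>k\<in>K. c k * mon (e k) x)"
proof -
  define c' where "c' f = (\<Sum>k\<in>{k\<in>K. e k = f}. c k)" for f
  have "\<forall>x. (\<Sum>k\<in>K. c k * mon (e k) x) = (\<Sum>f\<in>e ` K. c' f * (\<Prod>i\<in>UNIV. (x $ i) ^ (f i)))"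
  proof
    fix x :: "real^'n"
    have "(\<Sum>k\<in>K. c k * mon (e k) x) = (\<Sum>f\<in>e ` K. \<Sum>k\<in>{k\<in>K. e k = f}. c k * mon (e k) x)"
      by (rule sum.image_gen[OF assms])
    also have "\<dots> = (\<Sum>f\<in>e ` K. c' f * (\<Prod>i\<in>UNIV. (x $ i) ^ (f i)))"
      unfolding c'_def sum_distrib_right mon_def
      by (intro sum.cong refl) auto
    finally show "(\<Sum>k\<in>K. c k * mon (e k) x) = (\<Sum>f\<in>e ` K. c' f * (\<Prod>i\<in>UNIV. (x $ i) ^ (f i)))" .
  qed
  then show ?thesis unfolding poly_fun_def using assms by blast
qed

lemma poly_fun_add:
  assumes "poly_fun p" "poly_fun q"
  shows "poly_fun (\<lambda>x. p x + q x)"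
proof -
  obtain E1 c1 where 1: "finite E1" "\<And>x. p x = (\<Sum>e\<in>E1. c1 e * mon e x)"
    using assms(1) unfolding poly_fun_def mon_def by blast
  obtain E2 c2 where 2: "finite E2" "\<And>x. q x = (\<Sum>e\<in>E2. c2 e * mon e x)"
    using assms(2) unfolding poly_fun_def mon_def by blast
  have "poly_fun (\<lambda>x. \<Sum>k\<in>E1 <+> E2. case_sum c1 c2 k * mon (case_sum id id k) x)"
    by (rule poly_fun_gen) (use 1 2 in auto)
  moreover have "(\<lambda>x. \<Sum>k\<in>E1 <+> E2. case_sum c1 c2 k * mon (case_sum id id k) x) = (\<lambda>x. p x + q x)"
    using 1 2 by (simp add: sum.Plus)
  ultimately show ?thesis by simp
qed

lemma mon_0: "mon (\<lambda>_. 0) x = 1" by (simp add: mon_def)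

lemma mon_1: "mon (\<lambda>k. if k = i then 1 else 0) x = x $ i"
proof -
  have "mon (\<lambda>k. if k = i then 1 else 0) x = (\<Prod>k\<in>UNIV. if k = i then x $ k else 1)"
    unfolding mon_def by (intro prod.cong) auto
  then show ?thesis by simp
qed

lemma mon_2: "mon (\<lambda>k. (if k = i then 1 else 0) + (if k = j then 1 else 0)) x = x $ i * x $ j"
proof -
  have "mon (\<lambda>k. (if k = i then 1 else 0) + (if k = j then 1 else 0)) x
     = mon (\<lambda>k. if k = i then 1 else 0) x * mon (\<lambda>k. if k = j then 1 else 0) x"
    unfolding mon_def by (simp add: power_add prod.distrib)
  then show ?thesis by (simp add: mon_1)
qed

lemma sum_UNIV_pair:
  "(\<Sum>k\<in>(UNIV::('a::finite\<times>'b::finite) set). f (fst k) (snd k)) = (\<Sum>i\<in>UNIV. \<Sum>j\<in>UNIV. f i j)"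
  unfolding UNIV_Times_UNIV[symmetric] sum.cartesian_product by (simp add: case_prod_beta)

lemma poly_fun_quadric: "poly_fun (quadric_poly (A :: 'n::finite \<Rightarrow> 'n \<Rightarrow> real) b c)"
proof -
  have a: "poly_fun (\<lambda>x::real^'n. \<Sum>k\<in>UNIV\<times>UNIV. A (fst k) (snd k) *
      mon (\<lambda>l. (if l = fst k then 1 else 0) + (if l = snd k then 1 else 0)) x)"
    by (rule poly_fun_gen) simp
  have b: "poly_fun (\<lambda>x::real^'n. \<Sum>k\<in>UNIV. b k * mon (\<lambda>l. if l = k then 1 else 0) x)"
    by (rule poly_fun_gen) simp
  have c: "poly_fun (\<lambda>x::real^'n. \<Sum>k\<in>{()}. c * mon (\<lambda>l. 0) x)"
    by (rule poly_fun_gen) simp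
  have "quadric_poly A b c = (\<lambda>x. ((\<Sum>k\<in>UNIV\<times>UNIV. A (fst k) (snd k) *
      mon (\<lambda>l. (if l = fst k then 1 else 0) + (if l = snd k then 1 else 0)) x) +
      (\<Sum>k\<in>UNIV. b k * mon (\<lambda>l. if l = k then 1 else 0) x)) + (\<Sum>k\<in>{()}. c * mon (\<lambda>l. 0) x))"
    using sum_UNIV_pair[of "\<lambda>i j. A i j * (_ $ i * _ $ j)"]
    by (auto simp: quadric_poly_def mon_2 mon_1 mon_0 mult.assoc fun_eq_iff)
  then show ?thesis using poly_fun_add[OF poly_fun_add[OF a b] c] by simp
qed

lemma algebraic_zero: "poly_fun p \<Longrightarrow> algebraic_set {x. p x = 0}"
  unfolding algebraic_set_def by (rule exI[of _ "{p}"]) auto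

lemma algebraic_hyperplane: "algebraic_set {x::real^'n. a \<bullet> x = b}"
proof -
  have "{x::real^'n. a \<bullet> x = b} = {x. quadric_poly (\<lambda>_ _. 0) (\<lambda>i. a $ i) (-b) x = 0}"
    by (auto simp: quadric_poly_def inner_vec_def mult.commute)
  then show ?thesis by (simp only:) (rule algebraic_zero[OF poly_fun_quadric])
qed

lemma curve_absorb:
  assumes "irreducible_algebraic_curve \<gamma>" "algebraic_set Z" "S \<subseteq> \<gamma>" "S \<subseteq> Z" "infinite S"
  shows "\<gamma> \<subseteq> Z"
proof (rule ccontr)
  assume nz: "\<not> \<gamma> \<subseteq> Z"
  have "algebraic_set (\<gamma> \<inter> Z)"
  proof -
    have "algebraic_set \<gamma>" using assms(1) by (simp add: irreducible_algebraic_curve_def irreducible_algebraic_set_def)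
    then obtain P1 where P1: "\<forall>p\<in>P1. poly_fun p" "\<gamma> = {x. \<forall>p\<in>P1. p x = 0}"
      unfolding algebraic_set_def by blast
    obtain P2 where P2: "\<forall>p\<in>P2. poly_fun p" "Z = {x. \<forall>p\<in>P2. p x = 0}"
      using assms(2) unfolding algebraic_set_def by blast
    show ?thesis unfolding algebraic_set_def
      by (rule exI[of _ "P1 \<union> P2"]) (use P1 P2 in auto)
  qed
  moreover have "\<gamma> \<inter> Z \<subset> \<gamma>" using nz by auto
  moreover have "\<forall>W. algebraic_set W \<and> W \<subset> \<gamma> \<longrightarrow> finite W" using assms(1) by (simp add: irreducible_algebraic_curve_def)
  ultimately have "finite (\<gamma> \<inter> Z)" by blast
  moreover have "S \<subseteq> \<gamma> \<inter> Z" using assms by auto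
  ultimately show False using assms(5) finite_subset by blast
qed

lemma vec_deriv_from_components:
  fixes f :: "real \<Rightarrow> real^'n::finite"
  assumes "\<And>i. ((\<lambda>x. f x $ i) has_field_derivative d i) (at x0)"
  shows "(f has_vector_derivative (\<chi> i. d i)) (at x0)"
  unfolding has_vector_derivative_def
proof (subst has_derivative_componentwise_within, intro ballI)
  fix b :: "real^'n" assume "b \<in> Basis"
  then obtain i where b: "b = axis i 1" by (auto simp: Basis_vec_def)
  have "((\<lambda>x. f x $ i) has_derivative (\<lambda>h. h * d i)) (at x0)"
  proof -
    have "(\<lambda>h. h * d i) = (*) (d i)" by (auto simp: fun_eq_iff)
    then show ?thesis using assms[of i] by (simp add: has_field_derivative_def)
  qed
  then show "((\<lambda>x. f x \<bullet> b) has_derivative (\<lambda>h. (h *\<^sub>R (\<chi> i. d i)) \<bullet> b)) (at x0)"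
    by (simp add: b inner_axis)
qed

lemma analytic_vderiv:
  fixes f :: "real \<Rightarrow> real^'n::finite"
  assumes "real_analytic_on f S" "x0 \<in> S"
  shows "\<exists>D. (f has_vector_derivative D) (at x0)"
proof -
  obtain r a where r: "r > 0" and sa: "\<And>x. \<bar>x - x0\<bar> < r \<Longrightarrow> (\<lambda>n. (x - x0) ^ n *\<^sub>R a n) sums f x"
    using assms unfolding real_analytic_on_def by blast
  have "\<exists>d. ((\<lambda>x. f x $ i) has_field_derivative d) (at x0)" for i
  proof -
    define g where "g t = (\<Sum>n. (a n $ i) * t ^ n)" for t
    have cs: "(\<lambda>n. (a n $ i) * (x - x0) ^ n) sums (f x $ i)" if "\<bar>x - x0\<bar> < r" for x
      using bounded_linear.sums[OF bounded_linear_vec_nth[of i] sa[OF that]] by (simp add: mult.commute)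
    have summ: "summable (\<lambda>n. (a n $ i) * z ^ n)" if "norm z < r" for z
      using cs[of "z + x0"] that by (auto simp: sums_iff)
    have "(g has_field_derivative (\<Sum>n. diffs (\<lambda>n. a n $ i) n * 0 ^ n)) (at 0)"
      unfolding g_def by (rule termdiffs_strong'[of r]) (use summ r in auto)
    then have gd: "(g has_field_derivative (\<Sum>n. diffs (\<lambda>n. a n $ i) n * 0 ^ n)) (at (x0 - x0))" by simp
    have "((\<lambda>x. x - x0) has_field_derivative 1) (at x0)" by (auto intro!: derivative_eq_intros)
    from DERIV_chain2[OF gd this]
    have d1: "((\<lambda>x. g (x - x0)) has_field_derivative (\<Sum>n. diffs (\<lambda>n. a n $ i) n * 0 ^ n)) (at x0)"
      by simp
    have "((\<lambda>x. f x $ i) has_field_derivative (\<Sum>n. diffs (\<lambda>n. a n $ i) n * 0 ^ n)) (at x0)"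
    proof (rule has_field_derivative_transform_within_open[OF d1, of "ball x0 r"])
      fix x assume "x \<in> ball x0 r"
      then have "\<bar>x - x0\<bar> < r" by (simp add: dist_real_def abs_minus_commute)
      then show "g (x - x0) = f x $ i" using cs unfolding g_def by (simp add: sums_iff)
    qed (use r in auto)
    then show ?thesis by blast
  qed
  then obtain d where "\<And>i. ((\<lambda>x. f x $ i) has_field_derivative d i) (at x0)" by metis
  then show ?thesis using vec_deriv_from_components by blast
qed

lemma diag_identity:
  fixes P Q :: "real \<Rightarrow> real^'n::finite"
  assumes I: "open I" "x \<in> I" "y \<in> I"
    and dP: "(P has_vector_derivative P') (at x)" and dQ: "(Q has_vector_derivative Q') (at y)"
    and eq: "\<forall>x\<in>I. \<forall>y\<in>I. norm (P x - Q y) = h (x - y)"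
  shows "(P x - Q y) \<bullet> (P' - Q') = 0"
proof -
  define u where "u t = P (x + t) - Q (y + t)" for t
  have dP0: "((\<lambda>t. P (x + t)) has_vector_derivative P') (at 0)"
  proof -
    have "((\<lambda>t. x + t) has_vector_derivative 1) (at 0)" by (auto intro!: derivative_eq_intros)
    moreover have "(P has_vector_derivative P') (at ((\<lambda>t. x + t) 0))" using dP by simp
    ultimately show ?thesis using vector_diff_chain_at by (fastforce simp: o_def)
  qed
  have dQ0: "((\<lambda>t. Q (y + t)) has_vector_derivative Q') (at 0)"
  proof -
    have "((\<lambda>t. y + t) has_vector_derivative 1) (at 0)" by (auto intro!: derivative_eq_intros)
    moreover have "(Q has_vector_derivative Q') (at ((\<lambda>t. y + t) 0))" using dQ by simp
    ultimately show ?thesis using vector_diff_chain_at by (fastforce simp: o_def)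
  qed
  have du: "(u has_derivative (\<lambda>t. t *\<^sub>R (P' - Q'))) (at 0)"
    using has_vector_derivative_diff[OF dP0 dQ0] unfolding u_def has_vector_derivative_def .
  have dg: "((\<lambda>t. u t \<bullet> u t) has_derivative (\<lambda>t. u 0 \<bullet> (t *\<^sub>R (P' - Q')) + (t *\<^sub>R (P' - Q')) \<bullet> u 0)) (at 0)"
    by (rule has_derivative_inner[OF du du])
  obtain e1 where e1: "e1 > 0" "ball x e1 \<subseteq> I" using I open_contains_ball by blast
  obtain e2 where e2: "e2 > 0" "ball y e2 \<subseteq> I" using I open_contains_ball by blast
  define e where "e = min e1 e2"
  have "((\<lambda>t. u t \<bullet> u t) has_derivative (\<lambda>_. 0)) (at 0)"
  proof (rule has_derivative_transform_within_open[of "\<lambda>_. (h (x - y))\<^sup>2" _ _ _ "ball 0 e"])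
    show "((\<lambda>_. (h (x - y))\<^sup>2) has_derivative (\<lambda>_. 0)) (at 0)" by simp
    show "(0::real) \<in> ball 0 e" using e1 e2 by (simp add: e_def)
    fix t :: real assume "t \<in> ball 0 e"
    then have "x + t \<in> ball x e1" "y + t \<in> ball y e2" by (auto simp: e_def dist_real_def)
    then have "x + t \<in> I" "y + t \<in> I" using e1 e2 by auto
    then have "norm (u t) = h (x - y)" using eq unfolding u_def by (metis add_diff_cancel_right)
    then show "(h (x - y))\<^sup>2 = u t \<bullet> u t" by (metis power2_norm_eq_inner)
  qed simp
  from has_derivative_unique[OF dg this]
  have "u 0 \<bullet> (1 *\<^sub>R (P' - Q')) + (1 *\<^sub>R (P' - Q')) \<bullet> u 0 = 0" by metis
  then show ?thesis unfolding u_def by (simp add: inner_commute)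
qed

lemma quad_form:
  fixes M :: "real^'n::finite^'n"
  shows "quadric_poly (\<lambda>i j. M$i$j) (\<lambda>i. a$i) c z = z \<bullet> (M *v z) + a \<bullet> z + c"
  by (simp add: quadric_poly_def inner_vec_def matrix_vector_mult_def sum_distrib_left mult_ac)

lemma quad_zero:
  fixes M :: "real^'n::finite^'n"
  assumes "\<forall>z. z \<bullet> (M *v z) + a \<bullet> z + c = 0"
  shows "z \<bullet> (M *v z) = 0"
proof -
  have "z \<bullet> (M *v z) + a \<bullet> z + c = 0" "(-z) \<bullet> (M *v (-z)) + a \<bullet> (-z) + c = 0"
     "0 \<bullet> (M *v 0) + a \<bullet> 0 + c = 0"
    by (rule assms[rule_format])+
  moreover have "M *v (-z) = -(M *v z)"
    using matrix_vector_mult_diff_distrib[of M 0 z] by simp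
  ultimately show ?thesis by simp
qed

lemma inner_mat: "(x::real^'n::finite) \<bullet> (M *v z) = (transpose M *v x) \<bullet> z"
  by (simp add: dot_lmul_matrix)

lemma norm_sq_matrix: "((M::real^'n::finite^'n) *v z) \<bullet> (M *v z) = z \<bullet> ((transpose M ** M) *v z)"
  by (metis dot_lmul_matrix transpose_matrix_vector matrix_vector_mul_assoc inner_commute)

lemma mvk: "((A::real^'n::finite^'m::finite) *v v) $ k = (A $ k) \<bullet> v"
  by (simp add: matrix_vector_mult_def inner_vec_def mult.commute)

lemma neg_mv: "(- (A::real^'n::finite^'m::finite)) *v x = - (A *v x)"
  using matrix_vector_mult_diff_rdistrib[of 0 A x] by simp

lemma t1: fixes p p' qk q0 qk' q0' :: "real^'n::finite"
 assumes "(p - qk)\<bullet>(p' - qk') = 0" "(p - q0)\<bullet>(p' - q0') = 0"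
 shows "(qk - q0)\<bullet>p' = (qk\<bullet>qk' - q0\<bullet>q0') - (qk' - q0')\<bullet>p"
  using assms by (simp add: inner_diff_left inner_diff_right inner_commute) 
lemma inner_vmul: "(z::real^'n::finite) \<bullet> (q v* M) = q \<bullet> (M *v z)"
  by (metis dot_lmul_matrix inner_commute)
lemma t2: fixes z m q0 q0' :: "real^'n::finite" and M :: "real^'n^'n"
  shows "(z - q0) \<bullet> (m + M *v z) - z \<bullet> q0' + b0 = z \<bullet> (M *v z) + (m - (q0 v* M) - q0') \<bullet> z + (b0 - q0 \<bullet> m)"
  by (simp add: inner_add_right inner_add_left inner_diff_left inner_diff_right dot_lmul_matrix inner_vmul inner_commute)
lemma t3: fixes z m :: "real^'n::finite" and M :: "real^'n^'n"
  shows "z \<bullet> ((transpose M ** M) *v z) + (2 *\<^sub>R (m v* M)) \<bullet> z + (m \<bullet> m - C) = (m + M *v z) \<bullet> (m + M *v z) - C"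
proof -
  have "(M *v z) \<bullet> (M *v z) = z \<bullet> ((transpose M ** M) *v z)"
    by (metis dot_lmul_matrix transpose_matrix_vector matrix_vector_mul_assoc inner_commute)
  then show ?thesis by (simp add: inner_add_right inner_add_left dot_lmul_matrix inner_vmul inner_commute)
qed
lemma t4: fixes p p' q0 q0' m :: "real^'n::finite" and M :: "real^'n^'n"
  assumes "(p - q0) \<bullet> (p' - q0') = 0" "p' = m + M *v p"
  shows "(p - q0) \<bullet> (m + M *v p) - p \<bullet> q0' + q0 \<bullet> q0' = 0"
  using assms by (simp add: inner_diff_left inner_diff_right inner_commute)

lemma core:
  fixes P Q P' Q' :: "real \<Rightarrow> real^'n::finite" and \<gamma>P \<gamma>Q :: "(real^'n) set"
  assumes card: "CARD('n) \<ge> 2"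
    and cP: "irreducible_algebraic_curve \<gamma>P" and hP: "\<forall>H. hyperplane H \<longrightarrow> \<not> \<gamma>P \<subseteq> H"
    and cQ: "irreducible_algebraic_curve \<gamma>Q" and hQ: "\<forall>H. hyperplane H \<longrightarrow> \<not> \<gamma>Q \<subseteq> H"
    and I: "is_interval I" "open I" "I \<noteq> {}"
    and iP: "inj_on P I" "P ` I \<subseteq> \<gamma>P" and iQ: "inj_on Q I" "Q ` I \<subseteq> \<gamma>Q"
    and dP: "\<forall>x\<in>I. (P has_vector_derivative P' x) (at x)"
    and iden: "\<forall>x\<in>I. \<forall>y\<in>I. (P x - Q y) \<bullet> (P' x - Q' y) = 0"
  shows "\<exists>Z. quadric_surface Z \<and> \<gamma>P \<subseteq> Z"
proof -
  have infI: "infinite I"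
  proof -
    obtain x where "x \<in> I" using I by blast
    then show ?thesis using infinite_openin[of UNIV I x] I by (simp add: islimpt_UNIV)
  qed
  have infP: "infinite (P ` I)" using infI iP(1) finite_image_iff by blast
  have infQ: "infinite (Q ` I)" using infI iQ(1) finite_image_iff by blast
  have noHP: "\<not> P ` I \<subseteq> {z. a \<bullet> z = b}" if "a \<noteq> 0" for a b
  proof
    assume "P ` I \<subseteq> {z. a \<bullet> z = b}"
    then have "\<gamma>P \<subseteq> {z. a \<bullet> z = b}" using curve_absorb[OF cP algebraic_hyperplane iP(2) _ infP] by blast
    moreover have "hyperplane {z. a \<bullet> z = b}" using that unfolding hyperplane_def by blast
    ultimately show False using hP by blast
  qed
  have noHQ: "\<not> Q ` I \<subseteq> {z. a \<bullet> z = b}" if "a \<noteq> 0" for a b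
  proof
    assume "Q ` I \<subseteq> {z. a \<bullet> z = b}"
    then have "\<gamma>Q \<subseteq> {z. a \<bullet> z = b}" using curve_absorb[OF cQ algebraic_hyperplane iQ(2) _ infQ] by blast
    moreover have "hyperplane {z. a \<bullet> z = b}" using that unfolding hyperplane_def by blast
    ultimately show False using hQ by blast
  qed
  obtain y0 where y0: "y0 \<in> I" using I by blast
  define S where "S = (\<lambda>y. Q y - Q y0) ` I"
  have spanS: "span S = UNIV"
  proof (rule ccontr)
    assume "span S \<noteq> UNIV"
    then have dimlt: "dim S < DIM(real^'n)" using dim_eq_full dim_subset_UNIV[of S] by (metis le_neq_implies_less)
    obtain a where a: "a \<noteq> 0" "\<And>v. v \<in> span S \<Longrightarrow> orthogonal a v" using orthogonal_to_subspace_exists[OF dimlt] by blast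
    have "Q ` I \<subseteq> {z. a \<bullet> z = a \<bullet> Q y0}"
    proof
      fix z assume "z \<in> Q ` I" then obtain y where y: "y \<in> I" "z = Q y" by auto
      then have "Q y - Q y0 \<in> span S" unfolding S_def by (auto intro: span_base)
      then have "a \<bullet> (Q y - Q y0) = 0" using a(2) unfolding orthogonal_def by blast
      then show "z \<in> {z. a \<bullet> z = a \<bullet> Q y0}" using y by (simp add: inner_diff_right)
    qed
    with noHQ[OF a(1), where b="a \<bullet> Q y0"] show False by (rule notE)
  qed
  obtain B where B: "B \<subseteq> S" "independent B" "S \<subseteq> span B" by (rule maximal_independent_subset)
  have spanB: "span B = UNIV" using spanS B by (metis span_mono span_span top.extremum_uniqueI)
  have "card B = dim S" using basis_card_eq_dim[OF B(1) B(3) B(2)] .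
  also have "dim S = CARD('n)" using dim_eq_full[of S] spanS by simp
  finally have cardB: "card B = CARD('n)" .
  then have finB: "finite B" using card by (metis card.infinite not_numeral_le_zero)
  obtain bb where bb: "bij_betw bb (UNIV::'n set) B" using finite_same_card_bij[of "UNIV::'n set" B] finB cardB by auto
  have "\<forall>k. \<exists>y\<in>I. bb k = Q y - Q y0" using bb B(1) unfolding S_def bij_betw_def by auto
  then obtain yk where yk: "\<And>k. yk k \<in> I" "\<And>k. bb k = Q (yk k) - Q y0" by metis
  define W :: "real^'n^'n" where "W = (\<chi> k. Q (yk k) - Q y0)"
  have "rows W = B"
  proof -
    have "row k W = bb k" for k by (simp add: row_def W_def yk(2) vec_eq_iff)
    then have "rows W = range bb" by (auto simp: rows_def)
    then show ?thesis using bb by (simp add: bij_betw_def)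
  qed
  then obtain V :: "real^'n^'n" where V: "V ** W = mat 1" using matrix_left_invertible_span_rows spanB by blast
  define U :: "real^'n^'n" where "U = (\<chi> k. Q' (yk k) - Q' y0)"
  define \<beta> where "\<beta> y = Q y \<bullet> Q' y" for y
  define e :: "real^'n" where "e = (\<chi> k. \<beta> (yk k) - \<beta> y0)"
  define M where "M = - (V ** U)"
  define m where "m = V *v e"
  have PM: "P' x = m + M *v P x" if x: "x \<in> I" for x
  proof -
    have "W *v P' x = e - U *v P x"
    proof (rule iffD2[OF vec_eq_iff], rule allI)
      fix k
      have h1: "(P x - Q (yk k)) \<bullet> (P' x - Q' (yk k)) = 0" and h0: "(P x - Q y0) \<bullet> (P' x - Q' y0) = 0"
        using iden x yk(1) y0 by auto
      have "(W *v P' x) $ k = (Q (yk k) - Q y0) \<bullet> P' x" by (simp add: mvk W_def)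
      also have "\<dots> = (e - U *v P x) $ k"
        using t1[OF h1 h0] by (simp add: mvk U_def e_def \<beta>_def)
      finally show "(W *v P' x) $ k = (e - U *v P x) $ k" .
    qed
    then have "V *v (W *v P' x) = V *v (e - U *v P x)" by simp
    then show ?thesis
      by (simp add: matrix_vector_mul_assoc V M_def m_def matrix_vector_mult_diff_distrib neg_mv)
  qed
  define q1 where "q1 z = (z - Q y0) \<bullet> (m + M *v z) - z \<bullet> Q' y0 + \<beta> y0" for z
  have q1P: "q1 (P x) = 0" if x: "x \<in> I" for x
  proof -
    have "(P x - Q y0) \<bullet> (P' x - Q' y0) = 0" using iden x y0 by auto
    from t4[OF this PM[OF x]] show ?thesis by (simp add: q1_def \<beta>_def)
  qed
  define bq1 where "bq1 = m - (Q y0 v* M) - Q' y0"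
  define cq1 where "cq1 = \<beta> y0 - Q y0 \<bullet> m"
  have q1form: "q1 z = z \<bullet> (M *v z) + bq1 \<bullet> z + cq1" for z
    using t2[of z "Q y0" m M "Q' y0" "\<beta> y0"]
    unfolding q1_def bq1_def cq1_def by linarith
  show ?thesis
  proof (cases "\<exists>z. q1 z \<noteq> 0")
    case True
    define Z where "Z = {z. quadric_poly (\<lambda>i j. M$i$j) (\<lambda>i. bq1$i) cq1 z = 0}"
    have eqZ: "Z = {z. q1 z = 0}" by (simp add: Z_def quad_form q1form)
    have "quadric_surface Z" unfolding quadric_surface_def
    proof (rule exI[of _ "\<lambda>i j. M$i$j"], rule exI[of _ "\<lambda>i. bq1$i"], rule exI[of _ cq1], intro conjI)
      show "\<exists>x. quadric_poly (\<lambda>i j. M$i$j) (\<lambda>i. bq1$i) cq1 x \<noteq> 0" using True by (simp add: quad_form q1form)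
    qed (simp add: Z_def)
    moreover have "\<gamma>P \<subseteq> Z" unfolding Z_def
      by (rule curve_absorb[OF cP algebraic_zero[OF poly_fun_quadric] iP(2) _ infP]) (use q1P eqZ Z_def in auto)
    ultimately show ?thesis by blast
  next
    case False
    then have skew: "z \<bullet> (M *v z) = 0" for z using quad_zero[of M bq1 cq1] q1form by auto
    define R where "R x = m + M *v P x" for x
    have dR: "(R has_derivative (\<lambda>t. M *v (t *\<^sub>R P' x))) (at x)" if "x \<in> I" for x
    proof -
      have "(P has_derivative (\<lambda>t. t *\<^sub>R P' x)) (at x)" using dP that by (simp add: has_vector_derivative_def)
      from bounded_linear.has_derivative[OF matrix_vector_mul_bounded_linear this, of M]
      show ?thesis unfolding R_def by (auto intro!: derivative_eq_intros)
    qed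
    have "((\<lambda>x. R x \<bullet> R x) has_derivative (\<lambda>_. 0)) (at x within I)" if x: "x \<in> I" for x
    proof -
      have "((\<lambda>x. R x \<bullet> R x) has_derivative (\<lambda>t. R x \<bullet> (M *v (t *\<^sub>R P' x)) + (M *v (t *\<^sub>R P' x)) \<bullet> R x)) (at x)"
        by (rule has_derivative_inner[OF dR[OF x] dR[OF x]])
      moreover have "(\<lambda>t. R x \<bullet> (M *v (t *\<^sub>R P' x)) + (M *v (t *\<^sub>R P' x)) \<bullet> R x) = (\<lambda>_. 0)"
        using skew[of "R x"] PM[OF x] by (auto simp: fun_eq_iff R_def matrix_vector_mult_scaleR inner_commute)
      ultimately show ?thesis by (simp add: has_derivative_at_withinI)
    qed
    then obtain C where C: "\<forall>x\<in>I. R x \<bullet> R x = C"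
      using has_derivative_zero_constant[OF is_interval_convex[OF I(1)]] by blast
    define bq2 where "bq2 = 2 *\<^sub>R (m v* M)"
    define cq2 where "cq2 = m \<bullet> m - C"
    define q2 where "q2 z = z \<bullet> ((transpose M ** M) *v z) + bq2 \<bullet> z + cq2" for z
    have q2eq: "q2 z = (m + M *v z) \<bullet> (m + M *v z) - C" for z
      using t3[of z M m C] unfolding q2_def bq2_def cq2_def by linarith
    show ?thesis
    proof (cases "\<exists>z. q2 z \<noteq> 0")
      case True
      define Z where "Z = {z. quadric_poly (\<lambda>i j. (transpose M ** M)$i$j) (\<lambda>i. bq2$i) cq2 z = 0}"
      have eqZ: "Z = {z. q2 z = 0}" by (simp add: Z_def quad_form q2_def)
      have "quadric_surface Z" unfolding quadric_surface_def
      proof (rule exI[of _ "\<lambda>i j. (transpose M ** M)$i$j"], rule exI[of _ "\<lambda>i. bq2$i"], rule exI[of _ cq2], intro conjI)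
        show "\<exists>x. quadric_poly (\<lambda>i j. (transpose M ** M)$i$j) (\<lambda>i. bq2$i) cq2 x \<noteq> 0" using True by (simp add: quad_form q2_def)
      qed (simp add: Z_def)
      moreover have "\<gamma>P \<subseteq> Z"
      proof -
        have algZ: "algebraic_set Z" unfolding Z_def by (rule algebraic_zero[OF poly_fun_quadric])
        have "P ` I \<subseteq> Z" using C eqZ q2eq R_def by auto
        from curve_absorb[OF cP algZ iP(2) this infP] show ?thesis .
      qed
      ultimately show ?thesis by blast
    next
      case False
      then have "z \<bullet> ((transpose M ** M) *v z) = 0" for z using quad_zero[of "transpose M ** M" bq2 cq2] q2_def by auto
      then have Mz0: "M *v z = 0" for z using norm_sq_matrix by (metis inner_eq_zero_iff)
      then have P'm: "P' x = m" if "x \<in> I" for x using PM[OF that] by simp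
      have dz: "((\<lambda>x. P x - x *\<^sub>R m) has_vector_derivative 0) (at x within I)" if x: "x \<in> I" for x
      proof -
        have "((\<lambda>x. x *\<^sub>R m) has_vector_derivative m) (at x)"
          by (auto intro!: derivative_eq_intros)
        from has_vector_derivative_diff[OF dP[rule_format, OF x] this]
        show ?thesis using P'm[OF x] by (simp add: has_vector_derivative_at_within)
      qed
      obtain c0 where c0: "\<And>x. x \<in> I \<Longrightarrow> P x - x *\<^sub>R m = c0"
        using has_vector_derivative_zero_constant[OF is_interval_convex[OF I(1)] dz] by blast
      have "2 \<le> DIM(real^'n)" using card by simp
      then obtain a where a: "a \<noteq> 0" "orthogonal m a" by (rule orthogonal_to_vector_exists)
      have "P ` I \<subseteq> {z. a \<bullet> z = a \<bullet> c0}"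
      proof
        fix z assume "z \<in> P ` I" then obtain x where x: "x \<in> I" "z = P x" by auto
        then have "z = c0 + x *\<^sub>R m" using c0[OF x(1)] by (simp add: algebra_simps)
        then show "z \<in> {z. a \<bullet> z = a \<bullet> c0}" using a(2) by (simp add: orthogonal_def inner_add_right inner_commute)
      qed
      with noHP[OF a(1), where b="a \<bullet> c0"] show ?thesis by (rule notE)
    qed
  qed
qed

lemma swap_inner: "((b::real^'n::finite) - a) \<bullet> (d - c) = (a - b) \<bullet> (c - d)"
  by (simp add: inner_diff_left inner_diff_right inner_commute)

theorem mainTheorem7:
  fixes \<gamma>1 \<gamma>2 :: "(real^'n) set"
    and I :: "real set"
    and \<alpha>1 \<alpha>2 :: "real \<Rightarrow> real^'n"
    and h :: "real \<Rightarrow> real"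
  assumes "CARD('n) \<ge> 2"
    and "irreducible_algebraic_curve \<gamma>1" and "irreducible_algebraic_curve \<gamma>2"
    and "\<forall>H. hyperplane H \<longrightarrow> \<not> \<gamma>1 \<subseteq> H"
    and "\<forall>H. hyperplane H \<longrightarrow> \<not> \<gamma>2 \<subseteq> H"
    and "is_interval I" "open I" "I \<noteq> {}"
    and "inj_on \<alpha>1 I" "\<alpha>1 ` I \<subseteq> \<gamma>1" "real_analytic_on \<alpha>1 I"
    and "inj_on \<alpha>2 I" "\<alpha>2 ` I \<subseteq> \<gamma>2" "real_analytic_on \<alpha>2 I"
    and "inj_on h {x - y | x y. x \<in> I \<and> y \<in> I}"
    and "real_analytic_on h {x - y | x y. x \<in> I \<and> y \<in> I}"
    and "\<forall>x\<in>I. \<forall>y\<in>I. norm (\<alpha>1 x - \<alpha>2 y) = h (x - y)"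
  shows "(\<exists>Q. quadric_surface Q \<and> \<gamma>1 \<subseteq> Q) \<and> (\<exists>Q. quadric_surface Q \<and> \<gamma>2 \<subseteq> Q)"
proof -
  have "\<forall>x\<in>I. \<exists>D. (\<alpha>1 has_vector_derivative D) (at x)"
  proof
    fix x assume "x \<in> I"
    from analytic_vderiv[OF assms(11) this] show "\<exists>D. (\<alpha>1 has_vector_derivative D) (at x)" .
  qed
  from bchoice[OF this] obtain D1 where D1: "\<forall>x\<in>I. (\<alpha>1 has_vector_derivative D1 x) (at x)" by (elim exE)
  have "\<forall>x\<in>I. \<exists>D. (\<alpha>2 has_vector_derivative D) (at x)"
  proof
    fix x assume "x \<in> I"
    from analytic_vderiv[OF assms(14) this] show "\<exists>D. (\<alpha>2 has_vector_derivative D) (at x)" .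
  qed
  from bchoice[OF this] obtain D2 where D2: "\<forall>x\<in>I. (\<alpha>2 has_vector_derivative D2 x) (at x)" by (elim exE)
  have iden: "\<forall>x\<in>I. \<forall>y\<in>I. (\<alpha>1 x - \<alpha>2 y) \<bullet> (D1 x - D2 y) = 0"
  proof (intro ballI)
    fix x y assume x: "x \<in> I" and y: "y \<in> I"
    show "(\<alpha>1 x - \<alpha>2 y) \<bullet> (D1 x - D2 y) = 0"
      by (rule diag_identity[OF assms(7) x y D1[rule_format, OF x] D2[rule_format, OF y] assms(17)])
  qed
  have iden2: "\<forall>y\<in>I. \<forall>x\<in>I. (\<alpha>2 y - \<alpha>1 x) \<bullet> (D2 y - D1 x) = 0"
  proof (intro ballI)
    fix y x assume y: "y \<in> I" and x: "x \<in> I"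
    have "(\<alpha>2 y - \<alpha>1 x) \<bullet> (D2 y - D1 x) = (\<alpha>1 x - \<alpha>2 y) \<bullet> (D1 x - D2 y)"
      by (rule swap_inner)
    also have "\<dots> = 0" using iden[rule_format, OF x y] .
    finally show "(\<alpha>2 y - \<alpha>1 x) \<bullet> (D2 y - D1 x) = 0" .
  qed
  have A: "\<exists>Q. quadric_surface Q \<and> \<gamma>1 \<subseteq> Q"
    by (rule core[OF assms(1,2,4,3,5,6,7,8,9,10,12,13) D1 iden])
  have B: "\<exists>Q. quadric_surface Q \<and> \<gamma>2 \<subseteq> Q"
    by (rule core[OF assms(1,3,5,2,4,6,7,8,12,13,9,10) D2 iden2])
  from A B show ?thesis by (rule conjI)
qed

end
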